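(* Let $u,v$ be monomials with $\mu(u)\cap\mu(v)=\emptyset$ and $p_{ij}p_{ji}=1$ for all $x_i\in\mu(u)$, $x_j\in\mu(v)$. Then the following are equivalent: (i) $u\neq0$ and $v\neq0$ in $\mathfrak{B}(V)$; (ii) $uv\neq0$; (iii) $uv\notin\mathfrak{L}(V)$.
   Context: $V$ is a braided vector space of diagonal type over an algebraically closed field $F$ of characteristic $0$ with basis $x_1,\dots,x_n$, braiding $C(x_i\otimes x_j)=q_{ij}x_j\otimes x_i$, Nichols algebra $\mathfrak{B}(V)$ ($\mathbb{Z}^n$-graded, $\deg x_i=e_i$); $\chi(e_i,e_j)=q_{ij}$, $p_{ij}:=q_{ij}$, $p_{uv}:=\chi(\deg u,\deg v)$. For homogeneous $x,y$, $[x,y]:=yx-p_{yx}xy$; $\mathfrak{L}(V)$ is the linear span of all iterated brackets (any bracketing) of $x_1,\dots,x_n$. A monomial is a nonempty word in $x_1,\dots,x_n$ viewed in $\mathfrak{B}(V)$, and $\mu(u)$ is its set of letters. *)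

theory Defs
  imports Main "HOL-Combinatorics.Permutations" "HOL-Computational_Algebra.Polynomial"
begin

text \<open>Tensor algebra T(V) on letters x_0,...,x_{n-1}: elements are coefficient
functions on words (lists of letter indices).\<close>

type_synonym 'a tensor = "nat list \<Rightarrow> 'a"

definition mono :: "nat list \<Rightarrow> 'a::field tensor" where
  "mono w = (\<lambda>w'. if w' = w then 1 else 0)"

definition tmult :: "'a::field tensor \<Rightarrow> 'a tensor \<Rightarrow> 'a tensor" where
  "tmult f g = (\<lambda>w. \<Sum>k\<in>{0..length w}. f (take k w) * g (drop k w))"

text \<open>Bicharacter on degrees; a degree is represented by the list of letters.\<close>
definition chi :: "(nat \<Rightarrow> nat \<Rightarrow> 'a::field) \<Rightarrow> nat list \<Rightarrow> nat list \<Rightarrow> 'a" where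
  "chi q a b = prod_list [q i j. i \<leftarrow> a, j \<leftarrow> b]"

text \<open>Quantum symmetrizer (sum over all permutations of the braid-group action
of their Matsumoto lifts) for the diagonal braiding c(x_i \<otimes> x_j) = q_ij x_j \<otimes> x_i,
applied degree-wise.\<close>
definition qsym :: "(nat \<Rightarrow> nat \<Rightarrow> 'a::field) \<Rightarrow> 'a tensor \<Rightarrow> 'a tensor" where
  "qsym q f = (\<lambda>w'. \<Sum>\<sigma> | \<sigma> permutes {..<length w'}.
      (\<Prod>(p,p') \<in> {(p,p'). p < p' \<and> p' < length w' \<and> \<sigma> p' < \<sigma> p}.
          q (w' ! \<sigma> p) (w' ! \<sigma> p'))
      * f (map (\<lambda>p. w' ! \<sigma> p) [0..<length w']))"

text \<open>An element of T(V) is zero in the Nichols algebra B(V) = T(V)/I(V) iff it lies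
in I(V) = \<Oplus>_m ker(\<Omega>_m).\<close>
definition nichols_zero :: "(nat \<Rightarrow> nat \<Rightarrow> 'a::field) \<Rightarrow> 'a tensor \<Rightarrow> bool" where
  "nichols_zero q f \<longleftrightarrow> qsym q f = (\<lambda>_. 0)"

datatype btree = Letter nat | Br btree btree

fun letters :: "btree \<Rightarrow> nat list" where
  "letters (Letter i) = [i]"
| "letters (Br s t) = letters s @ letters t"

fun beval :: "(nat \<Rightarrow> nat \<Rightarrow> 'a::field) \<Rightarrow> btree \<Rightarrow> 'a tensor" where
  "beval q (Letter i) = mono [i]"
| "beval q (Br s t) =
     (\<lambda>w. tmult (beval q t) (beval q s) w
          - chi q (letters t) (letters s) * tmult (beval q s) (beval q t) w)"

definition in_LV :: "nat \<Rightarrow> (nat \<Rightarrow> nat \<Rightarrow> 'a::field) \<Rightarrow> 'a tensor \<Rightarrow> bool" where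
  "in_LV n q f \<longleftrightarrow> (\<exists>ts cs. length cs = length ts \<and>
      (\<forall>t\<in>set ts. \<forall>i\<in>set (letters t). i < n) \<and>
      nichols_zero q (\<lambda>w. f w - (\<Sum>k<length ts. cs ! k * beval q (ts ! k) w)))"

definition alg_closed_field :: "'a::field itself \<Rightarrow> bool" where
  "alg_closed_field _ \<longleftrightarrow> (\<forall>p :: 'a poly. degree p > 0 \<longrightarrow> (\<exists>x. poly p x = 0))"

end

theory Submission
  imports Defs
begin


definition sl :: "nat set \<Rightarrow> nat list" where "sl P = sorted_list_of_set P"
definition rk :: "nat set \<Rightarrow> nat \<Rightarrow> nat" where "rk P x = card {y\<in>P. y < x}"

lemma sl_strict: "sorted_wrt (<) (sl P)"
  unfolding sl_def by simp

lemma sl_len: "finite P \<Longrightarrow> length (sl P) = card P"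
  unfolding sl_def by simp

lemma sl_set: "finite P \<Longrightarrow> set (sl P) = P"
  unfolding sl_def by simp

lemma sl_less_iff:
  assumes "finite P" "i < card P" "j < card P"
  shows "sl P ! i < sl P ! j \<longleftrightarrow> i < j"
proof -
  have d: "distinct (sl P)" unfolding sl_def by simp
  show ?thesis
  proof
    assume "sl P ! i < sl P ! j"
    show "i < j"
    proof (rule ccontr)
      assume "\<not> i < j"
      then have "j < i \<or> j = i" by auto
      then show False using sorted_wrt_nth_less[OF sl_strict[of P], of j i] assms sl_len
        \<open>sl P ! i < sl P ! j\<close> by auto
    qed
  next
    assume "i < j" then show "sl P ! i < sl P ! j"
      using sorted_wrt_nth_less[OF sl_strict[of P], of i j] assms sl_len by auto
  qed
qed

lemma sl_inj:
  assumes "finite P" "i < card P" "j < card P" "sl P ! i = sl P ! j"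
  shows "i = j"
  using sl_less_iff[OF assms(1,2,3)] sl_less_iff[OF assms(1,3,2)] assms(4) by auto

lemma sl_in: "finite P \<Longrightarrow> i < card P \<Longrightarrow> sl P ! i \<in> P"
  using sl_set sl_len by (metis nth_mem)

lemma rk_sl:
  assumes "finite P" "i < card P"
  shows "rk P (sl P ! i) = i"
proof -
  have "{y\<in>P. y < sl P ! i} = (\<lambda>j. sl P ! j) ` {..<i}"
  proof (rule set_eqI, rule iffI)
    fix y assume "y \<in> {y\<in>P. y < sl P ! i}"
    then have "y \<in> set (sl P)" "y < sl P ! i" using sl_set[OF assms(1)] by auto
    then obtain j where "j < card P" "y = sl P ! j" using sl_len[OF assms(1)] by (metis in_set_conv_nth)
    then show "y \<in> (\<lambda>j. sl P ! j) ` {..<i}" using sl_less_iff[OF assms(1) _ assms(2)] \<open>y < sl P ! i\<close> by auto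
  next
    fix y assume "y \<in> (\<lambda>j. sl P ! j) ` {..<i}"
    then obtain j where "j < i" "y = sl P ! j" by auto
    then show "y \<in> {y\<in>P. y < sl P ! i}" using sl_less_iff[OF assms(1) _ assms(2)] sl_in[OF assms(1)] assms(2) by auto
  qed
  moreover have "inj_on (\<lambda>j. sl P ! j) {..<i}"
    using sl_inj[OF assms(1)] assms(2) by (intro inj_onI) auto
  ultimately show ?thesis unfolding rk_def by (simp add: card_image)
qed

lemma sl_rk:
  assumes "finite P" "x \<in> P"
  shows "sl P ! rk P x = x" "rk P x < card P"
proof -
  obtain i where "i < card P" "x = sl P ! i" using assms sl_set sl_len by (metis in_set_conv_nth)
  then show "sl P ! rk P x = x" "rk P x < card P" using rk_sl[OF assms(1)] by auto
qed


definition comb :: "nat \<Rightarrow> nat \<Rightarrow> nat set \<Rightarrow> (nat \<Rightarrow> nat) \<Rightarrow> (nat \<Rightarrow> nat) \<Rightarrow> nat \<Rightarrow> nat" where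
  "comb N k P \<alpha> \<beta> = (\<lambda>p. if p < k then sl P ! \<alpha> p else if p < N then sl ({..<N} - P) ! \<beta> (p - k) else p)"

definition dec :: "nat \<Rightarrow> nat \<Rightarrow> (nat \<Rightarrow> nat) \<Rightarrow> nat set \<times> (nat \<Rightarrow> nat) \<times> (nat \<Rightarrow> nat)" where
  "dec N k \<sigma> = (\<sigma> ` {..<k},
      (\<lambda>i. if i < k then rk (\<sigma> ` {..<k}) (\<sigma> i) else i),
      (\<lambda>i. if i < N - k then rk ({..<N} - \<sigma> ` {..<k}) (\<sigma> (k + i)) else i))"

lemma permutes_from_inj:
  fixes f :: "nat \<Rightarrow> nat" and n :: nat
  assumes "inj_on f {..<n}" "\<And>x. x < n \<Longrightarrow> f x < n" "\<And>x. x \<ge> n \<Longrightarrow> f x = x"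
  shows "f permutes {..<n}"
proof (rule bij_imp_permutes)
  have "f ` {..<n} = {..<n}" by (rule endo_inj_surj) (use assms in auto)
  then show "bij_betw f {..<n} {..<n}" using assms(1) by (simp add: bij_betw_def)
qed (use assms in auto)

definition inv_set :: "nat \<Rightarrow> (nat \<Rightarrow> nat) \<Rightarrow> (nat \<times> nat) set" where
  "inv_set N \<sigma> = {(p, p'). p < p' \<and> p' < N \<and> \<sigma> p' < \<sigma> p}"
definition coef :: "(nat \<Rightarrow> nat \<Rightarrow> 'a::field) \<Rightarrow> nat list \<Rightarrow> (nat \<Rightarrow> nat) \<Rightarrow> 'a" where
  "coef q w \<sigma> = (\<Prod>(p, p') \<in> inv_set (length w) \<sigma>. q (w ! \<sigma> p) (w ! \<sigma> p'))"
definition sub :: "nat list \<Rightarrow> nat set \<Rightarrow> nat list" where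
  "sub w P = map (\<lambda>i. w ! i) (sl P)"
definition crossset :: "nat \<Rightarrow> nat set \<Rightarrow> (nat \<times> nat) set" where
  "crossset N P = {(i, j). i \<in> P \<and> j < N \<and> j \<notin> P \<and> j < i}"
definition cross :: "(nat \<Rightarrow> nat \<Rightarrow> 'a::field) \<Rightarrow> nat list \<Rightarrow> nat set \<Rightarrow> 'a" where
  "cross q w P = (\<Prod>(i, j) \<in> crossset (length w) P. q (w ! i) (w ! j))"

lemma qsym_alt: "qsym q f w = (\<Sum>\<sigma> \<in> {\<sigma>. \<sigma> permutes {..<length w}}. coef q w \<sigma> * f (permute_list \<sigma> w))"
  unfolding qsym_def coef_def inv_set_def permute_list_def by simp

lemma sub_len: "finite P \<Longrightarrow> length (sub w P) = card P"
  unfolding sub_def using sl_len by simp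
lemma sub_nth: "finite P \<Longrightarrow> i < card P \<Longrightarrow> sub w P ! i = w ! (sl P ! i)"
  unfolding sub_def using sl_len by simp

context
  fixes N k :: nat and P :: "nat set" and \<alpha> \<beta> :: "nat \<Rightarrow> nat"
  assumes PN: "P \<subseteq> {..<N}" and cP: "card P = k"
    and pa: "\<alpha> permutes {..<k}" and pb: "\<beta> permutes {..<N - k}"
begin

lemma fP: "finite P" using PN finite_subset by blast
lemma fQ: "finite ({..<N} - P)" by simp
lemma kN: "k \<le> N" using cP PN by (metis card_lessThan card_mono finite_lessThan)
lemma cQ: "card ({..<N} - P) = N - k" using PN cP fP by (simp add: card_Diff_subset)

lemma comb_P: "p < k \<Longrightarrow> comb N k P \<alpha> \<beta> p \<in> P"
  unfolding comb_def using sl_in[OF fP] permutes_in_image[OF pa] cP by auto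

lemma comb_Q: "k \<le> p \<Longrightarrow> p < N \<Longrightarrow> comb N k P \<alpha> \<beta> p \<in> {..<N} - P"
proof -
  assume a: "k \<le> p" "p < N"
  then have "\<beta> (p - k) < N - k" using permutes_in_image[OF pb] by auto
  then show ?thesis unfolding comb_def using sl_in[OF fQ] cQ a by auto
qed

lemma comb_perm: "comb N k P \<alpha> \<beta> permutes {..<N}"
proof (rule permutes_from_inj)
  show "inj_on (comb N k P \<alpha> \<beta>) {..<N}"
  proof (rule inj_onI)
    fix x y assume x: "x \<in> {..<N}" and y: "y \<in> {..<N}" and e: "comb N k P \<alpha> \<beta> x = comb N k P \<alpha> \<beta> y"
    consider "x < k" "y < k" | "x < k" "k \<le> y" | "k \<le> x" "y < k" | "k \<le> x" "k \<le> y" by linarith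
    then show "x = y"
    proof cases
      case 1
      then have "sl P ! \<alpha> x = sl P ! \<alpha> y" using e unfolding comb_def by auto
      then have "\<alpha> x = \<alpha> y" using sl_inj[OF fP] permutes_in_image[OF pa] 1 cP by auto
      then show ?thesis using permutes_inj[OF pa] by (meson injD)
    next
      case 2 then show ?thesis using comb_P[of x] comb_Q[of y] e y by auto
    next
      case 3 then show ?thesis using comb_P[of y] comb_Q[of x] e x by auto
    next
      case 4
      then have "sl ({..<N} - P) ! \<beta> (x - k) = sl ({..<N} - P) ! \<beta> (y - k)" using e x y unfolding comb_def by auto
      moreover have "\<beta> (x - k) < N - k" "\<beta> (y - k) < N - k" using permutes_in_image[OF pb] 4 x y by auto
      ultimately have "\<beta> (x - k) = \<beta> (y - k)" using sl_inj[OF fQ] cQ by auto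
      then have "x - k = y - k" using permutes_inj[OF pb] by (meson injD)
      then show ?thesis using 4 by auto
    qed
  qed
next
  fix x assume "x < N" then show "comb N k P \<alpha> \<beta> x < N"
    using comb_P[of x] comb_Q[of x] PN by (cases "x < k") auto
next
  fix x assume "N \<le> x" then show "comb N k P \<alpha> \<beta> x = x" using kN unfolding comb_def by auto
qed

lemma comb_img: "comb N k P \<alpha> \<beta> ` {..<k} = P"
proof -
  have "comb N k P \<alpha> \<beta> ` {..<k} = (\<lambda>i. sl P ! i) ` (\<alpha> ` {..<k})"
    unfolding comb_def image_image by (rule image_cong) auto
  also have "\<alpha> ` {..<k} = {..<k}" using permutes_image[OF pa] .
  also have "(\<lambda>i. sl P ! i) ` {..<k} = set (sl P)" using sl_len[OF fP] cP
    by (auto simp: in_set_conv_nth)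
  finally show ?thesis using sl_set[OF fP] by simp
qed

lemma dec_comb: "dec N k (comb N k P \<alpha> \<beta>) = (P, \<alpha>, \<beta>)"
proof -
  have a: "(\<lambda>i. if i < k then rk P (comb N k P \<alpha> \<beta> i) else i) = \<alpha>"
  proof
    fix i show "(if i < k then rk P (comb N k P \<alpha> \<beta> i) else i) = \<alpha> i"
    proof (cases "i < k")
      case True
      then have "\<alpha> i < card P" using permutes_in_image[OF pa] cP by auto
      then show ?thesis using True rk_sl[OF fP] unfolding comb_def by simp
    next
      case False then show ?thesis using permutes_not_in[OF pa] by simp
    qed
  qed
  have b: "(\<lambda>i. if i < N - k then rk ({..<N} - P) (comb N k P \<alpha> \<beta> (k + i)) else i) = \<beta>"
  proof
    fix i show "(if i < N - k then rk ({..<N} - P) (comb N k P \<alpha> \<beta> (k + i)) else i) = \<beta> i"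
    proof (cases "i < N - k")
      case True
      then have "\<beta> i < card ({..<N} - P)" using permutes_in_image[OF pb] cQ by auto
      moreover have "\<not> k + i < k" "k + i < N" "k + i - k = i" using True by auto
      ultimately show ?thesis using True rk_sl[OF fQ] unfolding comb_def by simp
    next
      case False then show ?thesis using permutes_not_in[OF pb] by simp
    qed
  qed
  show ?thesis unfolding dec_def comb_img using a b by simp
qed


lemma take_fact:
  assumes "length w = N"
  shows "take k (permute_list (comb N k P \<alpha> \<beta>) w) = permute_list \<alpha> (sub w P)"
proof (rule nth_equalityI)
  show "length (take k (permute_list (comb N k P \<alpha> \<beta>) w)) = length (permute_list \<alpha> (sub w P))"
    using assms kN sub_len[OF fP] cP by simp
next
  fix i assume "i < length (take k (permute_list (comb N k P \<alpha> \<beta>) w))"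
  then have i: "i < k" "i < N" using assms kN by auto
  have ai: "\<alpha> i < k" using permutes_in_image[OF pa, of i] i by simp
  have "take k (permute_list (comb N k P \<alpha> \<beta>) w) ! i = w ! (sl P ! \<alpha> i)"
    using i assms unfolding permute_list_def comb_def by simp
  moreover have "permute_list \<alpha> (sub w P) ! i = w ! (sl P ! \<alpha> i)"
    using i ai cP sub_len[OF fP] sub_nth[OF fP]
    unfolding permute_list_def by simp
  ultimately show "take k (permute_list (comb N k P \<alpha> \<beta>) w) ! i = permute_list \<alpha> (sub w P) ! i" by simp
qed

lemma drop_fact:
  assumes "length w = N"
  shows "drop k (permute_list (comb N k P \<alpha> \<beta>) w) = permute_list \<beta> (sub w ({..<N} - P))"
proof (rule nth_equalityI)
  show "length (drop k (permute_list (comb N k P \<alpha> \<beta>) w)) = length (permute_list \<beta> (sub w ({..<N} - P)))"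
    using assms sub_len[OF fQ] cQ by simp
next
  fix i assume "i < length (drop k (permute_list (comb N k P \<alpha> \<beta>) w))"
  then have i: "i < N - k" "k + i < N" using assms kN by auto
  have bi: "\<beta> i < N - k" using permutes_in_image[OF pb, of i] i by simp
  have "drop k (permute_list (comb N k P \<alpha> \<beta>) w) ! i = w ! (sl ({..<N} - P) ! \<beta> i)"
    using i assms kN unfolding permute_list_def comb_def by simp
  moreover have "permute_list \<beta> (sub w ({..<N} - P)) ! i = w ! (sl ({..<N} - P) ! \<beta> i)"
    using i bi cQ sub_len[OF fQ] sub_nth[OF fQ]
    unfolding permute_list_def by simp
  ultimately show "drop k (permute_list (comb N k P \<alpha> \<beta>) w) ! i = permute_list \<beta> (sub w ({..<N} - P)) ! i" by simp
qed

lemma coef_fact: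
  assumes lw: "length w = N"
  shows "coef q w (comb N k P \<alpha> \<beta>) = cross q w P * coef q (sub w P) \<alpha> * coef q (sub w ({..<N} - P)) \<beta>"
proof -
  define s where "s = comb N k P \<alpha> \<beta>"
  have ps: "s permutes {..<N}" unfolding s_def by (rule comb_perm)
  define F where "F = (\<lambda>(p, p'). q (w ! s p) (w ! s p'))"
  define I1 where "I1 = {(p, p'). p < p' \<and> p' < k \<and> s p' < s p}"
  define I2 where "I2 = {(p, p'). k \<le> p \<and> p < p' \<and> p' < N \<and> s p' < s p}"
  define I3 where "I3 = {(p, p'). p < k \<and> k \<le> p' \<and> p' < N \<and> s p' < s p}"
  have split: "inv_set N s = I1 \<union> I2 \<union> I3" unfolding inv_set_def I1_def I2_def I3_def using kN by auto
  have sub3: "I1 \<subseteq> {..<N} \<times> {..<N}" "I2 \<subseteq> {..<N} \<times> {..<N}" "I3 \<subseteq> {..<N} \<times> {..<N}"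
    unfolding I1_def I2_def I3_def using kN by auto
  have fin: "finite I1" "finite I2" "finite I3" using sub3 by (auto intro: finite_subset)
  have disj: "I1 \<inter> I2 = {}" "(I1 \<union> I2) \<inter> I3 = {}" unfolding I1_def I2_def I3_def by auto
  have main: "coef q w s = prod F I1 * prod F I2 * prod F I3"
    unfolding coef_def lw split F_def[symmetric]
    using fin disj by (simp add: prod.union_disjoint)
  have lP: "length (sub w P) = k" using sub_len[OF fP] cP by simp
  have lQ: "length (sub w ({..<N} - P)) = N - k" using sub_len[OF fQ] cQ by simp
  have 1: "prod F I1 = coef q (sub w P) \<alpha>"
  proof -
    have "I1 = inv_set k \<alpha>"
    proof (rule set_eqI, clarify)
      fix p p'
      show "((p, p') \<in> I1) = ((p, p') \<in> inv_set k \<alpha>)"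
      proof (cases "p < p' \<and> p' < k")
        case True
        then have "\<alpha> p < k" "\<alpha> p' < k" using permutes_in_image[OF pa, of p] permutes_in_image[OF pa, of p'] by auto
        then have "sl P ! \<alpha> p' < sl P ! \<alpha> p \<longleftrightarrow> \<alpha> p' < \<alpha> p" using sl_less_iff[OF fP] cP by simp
        then show ?thesis using True unfolding I1_def inv_set_def s_def comb_def by auto
      next
        case False then show ?thesis unfolding I1_def inv_set_def by auto
      qed
    qed
    moreover have "F x = (case x of (p, p') \<Rightarrow> q (sub w P ! \<alpha> p) (sub w P ! \<alpha> p'))" if "x \<in> inv_set k \<alpha>" for x
    proof -
      obtain p p' where x0: "x = (p, p')" by (cases x)
      then have x: "x = (p, p')" "p < p'" "p' < k" using that unfolding inv_set_def by auto
      then have "\<alpha> p < k" "\<alpha> p' < k" using permutes_in_image[OF pa, of p] permutes_in_image[OF pa, of p'] by auto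
      then show ?thesis using x sub_nth[OF fP] cP unfolding F_def s_def comb_def by simp
    qed
    ultimately show ?thesis unfolding coef_def lP by (intro prod.cong) auto
  qed
  have 2: "prod F I2 = coef q (sub w ({..<N} - P)) \<beta>"
    unfolding coef_def lQ
  proof (rule prod.reindex_bij_witness[where i = "\<lambda>(a, b). (a + k, b + k)" and j = "\<lambda>(p, p'). (p - k, p' - k)"])
    fix a assume "a \<in> I2" then show "(case (case a of (p, p') \<Rightarrow> (p - k, p' - k)) of (a, b) \<Rightarrow> (a + k, b + k)) = a"
      unfolding I2_def by (cases a) auto
  next
    fix a assume a: "a \<in> I2"
    then obtain p p' where x: "a = (p, p')" "k \<le> p" "p < p'" "p' < N" "s p' < s p" unfolding I2_def by auto
    have "\<beta> (p - k) < N - k" "\<beta> (p' - k) < N - k" using permutes_in_image[OF pb, of "p - k"] permutes_in_image[OF pb, of "p' - k"] x by auto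
    moreover have "s p = sl ({..<N} - P) ! \<beta> (p - k)" "s p' = sl ({..<N} - P) ! \<beta> (p' - k)"
      using x kN unfolding s_def comb_def by auto
    ultimately have "\<beta> (p' - k) < \<beta> (p - k)" using x(5) sl_less_iff[OF fQ] cQ by simp
    then show "(case a of (p, p') \<Rightarrow> (p - k, p' - k)) \<in> inv_set (N - k) \<beta>"
      using x unfolding inv_set_def by auto
    have "sub w ({..<N} - P) ! \<beta> (p - k) = w ! s p" "sub w ({..<N} - P) ! \<beta> (p' - k) = w ! s p'"
      using \<open>s p = _\<close> \<open>s p' = _\<close> sub_nth[OF fQ] cQ \<open>\<beta> (p - k) < N - k\<close> \<open>\<beta> (p' - k) < N - k\<close> by auto
    then show "(case (case a of (p, p') \<Rightarrow> (p - k, p' - k)) of (p, p') \<Rightarrow> q (sub w ({..<N} - P) ! \<beta> p) (sub w ({..<N} - P) ! \<beta> p')) = F a"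
      using x unfolding F_def by simp
  next
    fix b assume "b \<in> inv_set (N - k) \<beta>" then show "(case (case b of (a, b) \<Rightarrow> (a + k, b + k)) of (p, p') \<Rightarrow> (p - k, p' - k)) = b"
      by (cases b) auto
  next
    fix b assume b: "b \<in> inv_set (N - k) \<beta>"
    then obtain a c where x: "b = (a, c)" "a < c" "c < N - k" "\<beta> c < \<beta> a" unfolding inv_set_def by auto
    have "\<beta> a < N - k" "\<beta> c < N - k" using permutes_in_image[OF pb, of a] permutes_in_image[OF pb, of c] x by auto
    moreover have "s (a + k) = sl ({..<N} - P) ! \<beta> a" "s (c + k) = sl ({..<N} - P) ! \<beta> c"
      using x kN unfolding s_def comb_def by auto
    ultimately have "s (c + k) < s (a + k)" using x(4) sl_less_iff[OF fQ] cQ by simp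
    then show "(case b of (a, b) \<Rightarrow> (a + k, b + k)) \<in> I2" using x unfolding I2_def by auto
  qed
  have 3: "prod F I3 = cross q w P"
    unfolding cross_def lw
  proof (rule prod.reindex_bij_witness[where j = "\<lambda>(p, p'). (s p, s p')" and i = "\<lambda>(a, b). (inv s a, inv s b)"])
    fix a assume "a \<in> I3" then show "(case (case a of (p, p') \<Rightarrow> (s p, s p')) of (a, b) \<Rightarrow> (inv s a, inv s b)) = a"
      using permutes_inverses[OF ps] by (cases a) auto
  next
    fix a assume "a \<in> I3"
    then obtain p p' where x: "a = (p, p')" "p < k" "k \<le> p'" "p' < N" "s p' < s p" unfolding I3_def by auto
    have "s p \<in> P" using comb_P x unfolding s_def by simp
    moreover have "s p' \<in> {..<N} - P" using comb_Q x unfolding s_def by simp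
    ultimately show "(case a of (p, p') \<Rightarrow> (s p, s p')) \<in> crossset N P" using x unfolding crossset_def by auto
    show "(case (case a of (p, p') \<Rightarrow> (s p, s p')) of (i, j) \<Rightarrow> q (w ! i) (w ! j)) = F a"
      using x unfolding F_def by simp
  next
    fix b assume "b \<in> crossset N P" then show "(case (case b of (a, b) \<Rightarrow> (inv s a, inv s b)) of (p, p') \<Rightarrow> (s p, s p')) = b"
      using permutes_inverses[OF ps] by (cases b) auto
  next
    fix b assume "b \<in> crossset N P"
    then obtain a c where x: "b = (a, c)" "a \<in> P" "c < N" "c \<notin> P" "c < a" unfolding crossset_def by auto
    have aN: "a < N" using x PN by auto
    have ia: "inv s a < N" using permutes_in_image[OF permutes_inv[OF ps], of a] aN by simp
    have ic: "inv s c < N" using permutes_in_image[OF permutes_inv[OF ps], of c] x by simp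
    have sa: "s (inv s a) = a" "s (inv s c) = c" using permutes_inverses[OF ps] by auto
    have "inv s a < k"
    proof (rule ccontr)
      assume "\<not> inv s a < k"
      then have "s (inv s a) \<in> {..<N} - P" using comb_Q ia unfolding s_def by simp
      then show False using sa x by simp
    qed
    moreover have "k \<le> inv s c"
    proof (rule ccontr)
      assume "\<not> k \<le> inv s c"
      then have "s (inv s c) \<in> P" using comb_P unfolding s_def by simp
      then show False using sa x by simp
    qed
    ultimately show "(case b of (a, b) \<Rightarrow> (inv s a, inv s b)) \<in> I3" using x ic sa unfolding I3_def by auto
  qed
  show ?thesis using main 1 2 3 unfolding s_def by simp
qed

end

context
  fixes N k :: nat and \<sigma> :: "nat \<Rightarrow> nat"
  assumes ps: "\<sigma> permutes {..<N}" and kN: "k \<le> N"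
begin

lemma dec_sub: "\<sigma> ` {..<k} \<subseteq> {..<N}"
proof
  fix x assume "x \<in> \<sigma> ` {..<k}"
  then obtain j where "j < k" "x = \<sigma> j" by auto
  then show "x \<in> {..<N}" using permutes_in_image[OF ps, of j] kN by simp
qed
lemma dec_inj: "inj_on \<sigma> A"
  using permutes_inj[OF ps] by (rule inj_on_subset) simp
lemma dec_card: "card (\<sigma> ` {..<k}) = k"
  using card_image[OF dec_inj] by simp
lemma dec_fin: "finite (\<sigma> ` {..<k})" by simp

lemma dec_Q: "i < N - k \<Longrightarrow> \<sigma> (k + i) \<in> {..<N} - \<sigma> ` {..<k}"
proof -
  assume "i < N - k"
  then have "\<sigma> (k + i) < N" using permutes_in_image[OF ps] by auto
  moreover have "\<sigma> (k + i) \<notin> \<sigma> ` {..<k}"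
  proof
    assume "\<sigma> (k + i) \<in> \<sigma> ` {..<k}"
    then obtain j where "j < k" "\<sigma> (k + i) = \<sigma> j" by auto
    then have "k + i = j" using permutes_inj[OF ps] by (meson injD)
    then show False using \<open>j < k\<close> by simp
  qed
  ultimately show ?thesis by auto
qed

lemma dec_a: "(\<lambda>i. if i < k then rk (\<sigma> ` {..<k}) (\<sigma> i) else i) permutes {..<k}"
proof (rule permutes_from_inj)
  show "inj_on (\<lambda>i. if i < k then rk (\<sigma> ` {..<k}) (\<sigma> i) else i) {..<k}"
  proof (rule inj_onI)
    fix x y assume "x \<in> {..<k}" "y \<in> {..<k}"
      "(if x < k then rk (\<sigma> ` {..<k}) (\<sigma> x) else x) = (if y < k then rk (\<sigma> ` {..<k}) (\<sigma> y) else y)"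
    then have "sl (\<sigma> ` {..<k}) ! rk (\<sigma> ` {..<k}) (\<sigma> x) = sl (\<sigma> ` {..<k}) ! rk (\<sigma> ` {..<k}) (\<sigma> y)"
      "x < k" "y < k" by auto
    then have "\<sigma> x = \<sigma> y" using sl_rk(1)[OF dec_fin] by auto
    then show "x = y" using permutes_inj[OF ps] by (meson injD)
  qed
qed (use sl_rk(2)[OF dec_fin] dec_card in auto)

lemma dec_b: "(\<lambda>i. if i < N - k then rk ({..<N} - \<sigma> ` {..<k}) (\<sigma> (k + i)) else i) permutes {..<N - k}"
proof (rule permutes_from_inj)
  show "inj_on (\<lambda>i. if i < N - k then rk ({..<N} - \<sigma> ` {..<k}) (\<sigma> (k + i)) else i) {..<N - k}"
  proof (rule inj_onI)
    fix x y assume "x \<in> {..<N - k}" "y \<in> {..<N - k}"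
      "(\<lambda>i. if i < N - k then rk ({..<N} - \<sigma> ` {..<k}) (\<sigma> (k + i)) else i) x
       = (\<lambda>i. if i < N - k then rk ({..<N} - \<sigma> ` {..<k}) (\<sigma> (k + i)) else i) y"
    then have "sl ({..<N} - \<sigma> ` {..<k}) ! rk ({..<N} - \<sigma> ` {..<k}) (\<sigma> (k + x))
       = sl ({..<N} - \<sigma> ` {..<k}) ! rk ({..<N} - \<sigma> ` {..<k}) (\<sigma> (k + y))"
      "x < N - k" "y < N - k" by auto
    then have "\<sigma> (k + x) = \<sigma> (k + y)" using sl_rk(1)[of "{..<N} - \<sigma> ` {..<k}"] dec_Q by auto
    then show "x = y" using permutes_inj[OF ps] by (meson injD add_left_imp_eq)
  qed
next
  fix x assume "x < N - k"
  then show "(if x < N - k then rk ({..<N} - \<sigma> ` {..<k}) (\<sigma> (k + x)) else x) < N - k"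
    using sl_rk(2)[of "{..<N} - \<sigma> ` {..<k}"] dec_Q[of x] dec_sub dec_card
    by (simp add: card_Diff_subset)
qed auto

lemma comb_dec: "(case dec N k \<sigma> of (P, a, b) \<Rightarrow> comb N k P a b) = \<sigma>"
proof -
  have "comb N k (\<sigma> ` {..<k}) (\<lambda>i. if i < k then rk (\<sigma> ` {..<k}) (\<sigma> i) else i)
      (\<lambda>i. if i < N - k then rk ({..<N} - \<sigma> ` {..<k}) (\<sigma> (k + i)) else i) p = \<sigma> p" for p
  proof -
    consider "p < k" | "k \<le> p" "p < N" | "N \<le> p" by linarith
    then show ?thesis
    proof cases
      case 1 then show ?thesis unfolding comb_def using sl_rk(1)[OF dec_fin] by auto
    next
      case 2
      then have "p - k < N - k" "k + (p - k) = p" by auto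
      then show ?thesis unfolding comb_def using 2 sl_rk(1)[of "{..<N} - \<sigma> ` {..<k}"] dec_Q[of "p - k"] by auto
    next
      case 3 then show ?thesis unfolding comb_def using kN permutes_not_in[OF ps] by auto
    qed
  qed
  then show ?thesis unfolding dec_def by auto
qed

end


lemma per_k:
  assumes kN: "k \<le> length w"
  shows "(\<Sum>\<sigma>\<in>{\<sigma>. \<sigma> permutes {..<length w}}. coef q w \<sigma> * (f (take k (permute_list \<sigma> w)) * g (drop k (permute_list \<sigma> w))))
    = (\<Sum>P\<in>{P\<in>Pow {..<length w}. card P = k}. cross q w P * qsym q f (sub w P) * qsym q g (sub w ({..<length w} - P)))"
proof -
  define N where "N = length w"
  define Pk where "Pk = {P\<in>Pow {..<N}. card P = k}"
  define Sk where "Sk = {\<alpha>. \<alpha> permutes {..<k}}"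
  define SNk where "SNk = {\<beta>. \<beta> permutes {..<N - k}}"
  define H where "H = (\<lambda>P \<alpha> \<beta>. cross q w P * (coef q (sub w P) \<alpha> * f (permute_list \<alpha> (sub w P)))
      * (coef q (sub w ({..<N} - P)) \<beta> * g (permute_list \<beta> (sub w ({..<N} - P)))))"
  have "(\<Sum>P\<in>{P\<in>Pow {..<length w}. card P = k}. cross q w P * qsym q f (sub w P) * qsym q g (sub w ({..<length w} - P)))
      = (\<Sum>P\<in>Pk. \<Sum>\<alpha>\<in>Sk. \<Sum>\<beta>\<in>SNk. H P \<alpha> \<beta>)"
    unfolding N_def[symmetric] Pk_def[symmetric]
  proof (rule sum.cong[OF refl])
    fix P assume "P \<in> Pk"
    then have PN: "P \<subseteq> {..<N}" and cP: "card P = k" unfolding Pk_def by auto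
    have fP: "finite P" using PN finite_subset by blast
    have lP: "length (sub w P) = k" using sub_len[OF fP] cP by simp
    have lQ: "length (sub w ({..<N} - P)) = N - k" using sub_len[of "{..<N} - P"] PN cP fP by (simp add: card_Diff_subset)
    show "cross q w P * qsym q f (sub w P) * qsym q g (sub w ({..<N} - P)) = (\<Sum>\<alpha>\<in>Sk. \<Sum>\<beta>\<in>SNk. H P \<alpha> \<beta>)"
      unfolding qsym_alt lP lQ Sk_def[symmetric] SNk_def[symmetric] H_def
      by (simp add: sum_distrib_left sum_distrib_right mult.assoc) (rule sum.swap)
  qed
  also have "\<dots> = (\<Sum>x\<in>Pk \<times> (Sk \<times> SNk). case x of (P, \<alpha>, \<beta>) \<Rightarrow> H P \<alpha> \<beta>)"
    by (simp add: sum.cartesian_product)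
  also have "\<dots> = (\<Sum>\<sigma>\<in>{\<sigma>. \<sigma> permutes {..<N}}. coef q w \<sigma> * (f (take k (permute_list \<sigma> w)) * g (drop k (permute_list \<sigma> w))))"
  proof (rule sum.reindex_bij_witness[where j = "\<lambda>(P, \<alpha>, \<beta>). comb N k P \<alpha> \<beta>" and i = "dec N k"])
    fix a assume "a \<in> Pk \<times> (Sk \<times> SNk)"
    then obtain P \<alpha> \<beta> where a: "a = (P, \<alpha>, \<beta>)" "P \<subseteq> {..<N}" "card P = k" "\<alpha> permutes {..<k}" "\<beta> permutes {..<N - k}"
      unfolding Pk_def Sk_def SNk_def by auto
    show "dec N k (case a of (P, \<alpha>, \<beta>) \<Rightarrow> comb N k P \<alpha> \<beta>) = a" using dec_comb[OF a(2-5)] a(1) by simp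
    show "(case a of (P, \<alpha>, \<beta>) \<Rightarrow> comb N k P \<alpha> \<beta>) \<in> {\<sigma>. \<sigma> permutes {..<N}}" using comb_perm[OF a(2-5)] a(1) by simp
    have lw: "length w = N" unfolding N_def ..
    show "coef q w (case a of (P, \<alpha>, \<beta>) \<Rightarrow> comb N k P \<alpha> \<beta>) *
         (f (take k (permute_list (case a of (P, \<alpha>, \<beta>) \<Rightarrow> comb N k P \<alpha> \<beta>) w)) *
          g (drop k (permute_list (case a of (P, \<alpha>, \<beta>) \<Rightarrow> comb N k P \<alpha> \<beta>) w))) =
         (case a of (P, \<alpha>, \<beta>) \<Rightarrow> H P \<alpha> \<beta>)"
      using a(1) coef_fact[OF a(2-5) lw, where q=q] take_fact[OF a(2-5) lw] drop_fact[OF a(2-5) lw]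
      unfolding H_def by (simp add: mult_ac)
  next
    fix b assume "b \<in> {\<sigma>. \<sigma> permutes {..<N}}"
    then have pb: "b permutes {..<N}" by simp
    have kN': "k \<le> N" using kN unfolding N_def .
    show "(case dec N k b of (P, \<alpha>, \<beta>) \<Rightarrow> comb N k P \<alpha> \<beta>) = b" using comb_dec[OF pb kN'] .
    show "dec N k b \<in> Pk \<times> (Sk \<times> SNk)"
      unfolding dec_def Pk_def Sk_def SNk_def
      using dec_sub[OF pb kN'] dec_card[OF pb kN'] dec_a[OF pb kN'] dec_b[OF pb kN'] by simp
  qed
  finally show ?thesis unfolding N_def by simp
qed

lemma L1:
  "qsym q (tmult f g) w = (\<Sum>P\<in>Pow {..<length w}. cross q w P * qsym q f (sub w P) * qsym q g (sub w ({..<length w} - P)))"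
proof -
  define N where "N = length w"
  have "qsym q (tmult f g) w = (\<Sum>\<sigma>\<in>{\<sigma>. \<sigma> permutes {..<N}}. coef q w \<sigma> * (\<Sum>k\<in>{0..N}. f (take k (permute_list \<sigma> w)) * g (drop k (permute_list \<sigma> w))))"
    unfolding qsym_alt tmult_def N_def by simp
  also have "\<dots> = (\<Sum>k\<in>{0..N}. \<Sum>\<sigma>\<in>{\<sigma>. \<sigma> permutes {..<N}}. coef q w \<sigma> * (f (take k (permute_list \<sigma> w)) * g (drop k (permute_list \<sigma> w))))"
    by (simp add: sum_distrib_left) (rule sum.swap)
  also have "\<dots> = (\<Sum>k\<in>{0..N}. \<Sum>P\<in>{P\<in>Pow {..<N}. card P = k}. cross q w P * qsym q f (sub w P) * qsym q g (sub w ({..<N} - P)))"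
    by (rule sum.cong[OF refl]) (use per_k[of _ w q f g] in \<open>simp add: N_def\<close>)
  also have "\<dots> = (\<Sum>P\<in>Pow {..<N}. cross q w P * qsym q f (sub w P) * qsym q g (sub w ({..<N} - P)))"
  proof (rule sum.group)
    show "card ` Pow {..<N} \<subseteq> {0..N}"
      by (auto dest: card_mono[rotated] simp del: Pow_iff intro: )
  qed auto
  finally show ?thesis unfolding N_def .
qed




lemma qsym_nz:
  assumes "qsym q f w \<noteq> 0"
  obtains \<sigma> where "\<sigma> permutes {..<length w}" "f (permute_list \<sigma> w) \<noteq> 0"
proof -
  from assms obtain \<sigma> where "\<sigma> \<in> {\<sigma>. \<sigma> permutes {..<length w}}" "coef q w \<sigma> * f (permute_list \<sigma> w) \<noteq> 0"
    unfolding qsym_alt by (rule sum.not_neutral_contains_not_neutral)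
  then show ?thesis using that by auto
qed

lemma qsym_supp:
  assumes "\<And>x. f x \<noteq> 0 \<Longrightarrow> mset x = M" "qsym q f w \<noteq> 0"
  shows "mset w = M"
proof -
  obtain \<sigma> where "\<sigma> permutes {..<length w}" "f (permute_list \<sigma> w) \<noteq> 0" using qsym_nz[OF assms(2)] .
  then show ?thesis using assms(1) mset_permute_list by metis
qed

lemma qsym_diff: "qsym q (\<lambda>x. F x - G x) w = qsym q F w - qsym q G w"
  unfolding qsym_alt by (simp add: algebra_simps sum_subtractf)

lemma qsym_scal: "qsym q (\<lambda>x. c * F x) w = c * qsym q F w"
  unfolding qsym_alt by (simp add: algebra_simps sum_distrib_left)

lemma qsym_sum: "qsym q (\<lambda>x. \<Sum>k\<in>K. c k * h k x) w = (\<Sum>k\<in>K. c k * qsym q (h k) w)"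
  unfolding qsym_alt by (simp add: sum_distrib_left mult_ac) (rule sum.swap)

lemma ideal_l: "qsym q f = (\<lambda>_. 0) \<Longrightarrow> qsym q (tmult f g) = (\<lambda>_. 0)"
  by (rule ext) (simp add: L1)

lemma ideal_r: "qsym q g = (\<lambda>_. 0) \<Longrightarrow> qsym q (tmult f g) = (\<lambda>_. 0)"
  by (rule ext) (simp add: L1)

lemma mono_app: "(mono (u @ v) :: 'a::field tensor) = tmult (mono u) (mono v)"
proof
  fix w
  have "(tmult (mono u) (mono v) w :: 'a) = (\<Sum>k\<in>{0..length w}. if k = length u \<and> w = u @ v then (1::'a) else 0)"
    unfolding tmult_def mono_def
  proof (rule sum.cong[OF refl])
    fix k assume k: "k \<in> {0..length w}"
    have "(take k w = u \<and> drop k w = v) \<longleftrightarrow> (k = length u \<and> w = u @ v)"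
    proof
      assume "take k w = u \<and> drop k w = v"
      then have h: "take k w = u" "drop k w = v" by auto
      have "length (take k w) = k" using k by simp
      then have "k = length u" using h(1) by simp
      moreover have "w = take k w @ drop k w" by simp
      then have "w = u @ v" using h by simp
      ultimately show "k = length u \<and> w = u @ v" by simp
    next
      assume "k = length u \<and> w = u @ v" then show "take k w = u \<and> drop k w = v" by simp
    qed
    then show "(if take k w = u then 1 else 0) * (if drop k w = v then 1 else 0) = (if k = length u \<and> w = u @ v then (1::'a) else 0)"
      by auto
  qed
  also have "\<dots> = mono (u @ v) w" unfolding mono_def by (cases "w = u @ v") auto
  finally show "mono (u @ v) w = (tmult (mono u) (mono v) w :: 'a)" by simp
qed

lemma tmult_supp:
  assumes "\<And>x. f x \<noteq> 0 \<Longrightarrow> mset x = MF" "\<And>x. g x \<noteq> 0 \<Longrightarrow> mset x = MG" "tmult f g w \<noteq> 0"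
  shows "mset w = MF + MG"
proof -
  from assms(3) obtain k where "k \<in> {0..length w}" "f (take k w) * g (drop k w) \<noteq> 0" unfolding tmult_def
    by (rule sum.not_neutral_contains_not_neutral)
  then have "f (take k w) \<noteq> 0" "g (drop k w) \<noteq> 0" by auto
  then have "mset (take k w) = MF" "mset (drop k w) = MG" using assms(1,2) by auto
  moreover have "mset w = mset (take k w) + mset (drop k w)"
    by (metis append_take_drop_id mset_append)
  ultimately show ?thesis by simp
qed

lemma letters_ne: "letters t \<noteq> []"
  by (induction t) auto

lemma beval_supp: "beval q t w \<noteq> 0 \<Longrightarrow> mset w = mset (letters t)"
proof (induction t arbitrary: w)
  case (Letter i)
  then show ?case by (simp add: mono_def split: if_splits)
next
  case (Br s t)
  have "tmult (beval q t) (beval q s) w \<noteq> 0 \<or> tmult (beval q s) (beval q t) w \<noteq> 0"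
    using Br.prems by auto
  then show ?case
  proof
    assume "tmult (beval q t) (beval q s) w \<noteq> 0"
    then have "mset w = mset (letters t) + mset (letters s)" using tmult_supp Br.IH by blast
    then show ?thesis by (simp add: add.commute)
  next
    assume "tmult (beval q s) (beval q t) w \<noteq> 0"
    then have "mset w = mset (letters s) + mset (letters t)" using tmult_supp Br.IH by blast
    then show ?thesis by simp
  qed
qed

lemma set_sub: "finite P \<Longrightarrow> set (sub w P) = (\<lambda>i. w ! i) ` P"
  unfolding sub_def using sl_set by simp

lemma prod_sub: "finite P \<Longrightarrow> prod_list (map h (sub w P)) = (\<Prod>i\<in>P. h (w ! i))"
proof -
  assume fP: "finite P"
  have "distinct (sl P)" unfolding sl_def by simp
  then have "prod_list (map (\<lambda>i. h (w ! i)) (sl P)) = (\<Prod>i\<in>set (sl P). h (w ! i))"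
    by (simp add: prod.distinct_set_conv_list)
  then show ?thesis unfolding sub_def using sl_set[OF fP] by (simp add: comp_def)
qed

lemma prod_list_mset: "prod_list (map h xs) = prod_mset (image_mset h (mset xs))"
  by (induction xs) auto

lemma chi_alt: "chi q a b = prod_list (map (\<lambda>i. prod_list (map (q i) b)) a)"
  unfolding chi_def by (induction a) auto

lemma chi_mset: "mset a = mset a' \<Longrightarrow> mset b = mset b' \<Longrightarrow> chi q a b = chi q a' b'"
  unfolding chi_alt prod_list_mset by simp

lemma chi_sub: "finite P \<Longrightarrow> finite R \<Longrightarrow> chi q (sub w P) (sub w R) = (\<Prod>i\<in>P. \<Prod>j\<in>R. q (w ! i) (w ! j))"
  unfolding chi_alt by (simp add: prod_sub)


lemma sum_single:
  assumes "finite A" "x \<in> A" "\<And>y. y \<in> A \<Longrightarrow> y \<noteq> x \<Longrightarrow> g y = 0"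
  shows "sum g A = g x"
proof -
  have "sum g A = g x + sum g (A - {x})" using sum.remove[OF assms(1,2)] .
  moreover have "sum g (A - {x}) = 0" using assms(3) by (intro sum.neutral) auto
  ultimately show ?thesis by simp
qed

lemma KL:
  assumes P: "P \<subseteq> {..<length w}"
    and F: "\<And>x. F x \<noteq> 0 \<Longrightarrow> mset x = MF" and G: "\<And>x. G x \<noteq> 0 \<Longrightarrow> mset x = MG"
    and disj: "set_mset MF \<inter> set_mset MG = {}"
    and nz1: "qsym q F (sub w P) \<noteq> 0" and nz2: "qsym q G (sub w ({..<length w} - P)) \<noteq> 0"
  shows "P = {i. i < length w \<and> w ! i \<in> set_mset MF}" "\<forall>i<length w. w ! i \<in> set_mset MF \<union> set_mset MG"
proof -
  have fP: "finite P" using P finite_subset by blast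
  have "mset (sub w P) = MF" by (rule qsym_supp[OF F nz1])
  then have A: "(\<lambda>i. w ! i) ` P = set_mset MF" using set_sub[OF fP, of w] by (metis set_mset_mset)
  have "mset (sub w ({..<length w} - P)) = MG" by (rule qsym_supp[OF G nz2])
  then have B: "(\<lambda>i. w ! i) ` ({..<length w} - P) = set_mset MG" using set_sub[of "{..<length w} - P" w] by (metis finite_Diff finite_lessThan set_mset_mset)
  show "P = {i. i < length w \<and> w ! i \<in> set_mset MF}"
  proof (rule set_eqI, rule iffI)
    fix i assume "i \<in> P" then show "i \<in> {i. i < length w \<and> w ! i \<in> set_mset MF}" using P A by auto
  next
    fix i assume i: "i \<in> {i. i < length w \<and> w ! i \<in> set_mset MF}"
    show "i \<in> P"
    proof (rule ccontr)
      assume "i \<notin> P"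
      then have "w ! i \<in> set_mset MG" using B i by auto
      then show False using i disj by auto
    qed
  qed
  show "\<forall>i<length w. w ! i \<in> set_mset MF \<union> set_mset MG"
  proof (intro allI impI)
    fix i assume "i < length w"
    then show "w ! i \<in> set_mset MF \<union> set_mset MG" using A B by (cases "i \<in> P") auto
  qed
qed

lemma crossid:
  assumes d: "XP \<inter> YP = {}" and u: "XP \<union> YP = {..<length w}"
    and sy: "\<And>i j. i \<in> YP \<Longrightarrow> j \<in> XP \<Longrightarrow> q (w ! i) (w ! j) * q (w ! j) (w ! i) = 1"
  shows "cross q w YP = (\<Prod>i\<in>YP. \<Prod>j\<in>XP. q (w ! i) (w ! j)) * cross q w XP"
proof -
  define N where "N = length w"
  define h where "h = (\<lambda>(i, j). q (w ! i) (w ! j))"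
  have fX: "finite XP" "finite YP" using u by (metis finite_Un finite_lessThan)+
  define A where "A = {(i, j). i \<in> YP \<and> j \<in> XP \<and> j < i}"
  define B where "B = {(i, j). i \<in> YP \<and> j \<in> XP \<and> i < j}"
  have fAB: "finite A" "finite B"
    using fX by (auto intro: finite_subset[of _ "YP \<times> XP"] simp: A_def B_def)
  have AB: "YP \<times> XP = A \<union> B" "A \<inter> B = {}" unfolding A_def B_def using d by auto
  have "(\<Prod>i\<in>YP. \<Prod>j\<in>XP. q (w ! i) (w ! j)) = prod h (YP \<times> XP)"
    unfolding h_def by (simp add: prod.cartesian_product)
  also have "\<dots> = prod h A * prod h B" unfolding AB(1) using fAB AB(2) by (rule prod.union_disjoint)
  finally have e1: "(\<Prod>i\<in>YP. \<Prod>j\<in>XP. q (w ! i) (w ! j)) = prod h A * prod h B" .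
  have cY: "cross q w YP = prod h A"
  proof -
    have "crossset (length w) YP = A" unfolding crossset_def A_def using d u by auto
    then show ?thesis unfolding cross_def h_def by simp
  qed
  have cX: "cross q w XP = prod (\<lambda>(i, j). h (j, i)) B"
    unfolding cross_def
  proof (rule prod.reindex_bij_witness[where i = "\<lambda>(a, b). (b, a)" and j = "\<lambda>(a, b). (b, a)"])
    fix a assume "a \<in> crossset (length w) XP"
    then show "(case case a of (a, b) \<Rightarrow> (b, a) of (a, b) \<Rightarrow> (b, a)) = a" by (cases a) auto
    show "(case a of (a, b) \<Rightarrow> (b, a)) \<in> B" using \<open>a \<in> _\<close> u d unfolding crossset_def B_def by (cases a) auto
    show "(case case a of (a, b) \<Rightarrow> (b, a) of (i, j) \<Rightarrow> h (j, i)) = (case a of (i, j) \<Rightarrow> q (w ! i) (w ! j))"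
      unfolding h_def by (cases a) auto
  next
    fix b assume "b \<in> B"
    then show "(case case b of (a, b) \<Rightarrow> (b, a) of (a, b) \<Rightarrow> (b, a)) = b" by (cases b) auto
    show "(case b of (a, b) \<Rightarrow> (b, a)) \<in> crossset (length w) XP" using \<open>b \<in> B\<close> u d unfolding crossset_def B_def by (cases b) auto
  qed
  have "prod h B * prod (\<lambda>(i, j). h (j, i)) B = prod (\<lambda>x. h x * (case x of (i, j) \<Rightarrow> h (j, i))) B"
    by (simp add: prod.distrib)
  also have "\<dots> = 1"
  proof (rule prod.neutral, rule ballI)
    fix x assume "x \<in> B"
    then obtain i j where "x = (i, j)" "i \<in> YP" "j \<in> XP" unfolding B_def by auto
    then show "h x * (case x of (i, j) \<Rightarrow> h (j, i)) = 1" unfolding h_def using sy by simp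
  qed
  finally have "prod h B * cross q w XP = 1" using cX by simp
  then show ?thesis using e1 cY by (metis mult.assoc mult_1_right)
qed

lemma CL:
  assumes F: "\<And>x. f x \<noteq> 0 \<Longrightarrow> mset x = mset lf" and G: "\<And>x. g x \<noteq> 0 \<Longrightarrow> mset x = mset lg"
    and disj: "set lf \<inter> set lg = {}" and sy: "\<forall>x\<in>set lf. \<forall>y\<in>set lg. q x y * q y x = 1"
  shows "qsym q (tmult g f) w = chi q lg lf * qsym q (tmult f g) w"
proof -
  define N where "N = length w"
  define XP where "XP = {i. i < N \<and> w ! i \<in> set lf}"
  define YP where "YP = {i. i < N \<and> w ! i \<in> set lg}"
  define TL where "TL = (\<lambda>P. cross q w P * qsym q g (sub w P) * qsym q f (sub w ({..<N} - P)))"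
  define TR where "TR = (\<lambda>P. cross q w P * qsym q f (sub w P) * qsym q g (sub w ({..<N} - P)))"
  have eL: "qsym q (tmult g f) w = sum TL (Pow {..<N})" unfolding L1 TL_def N_def ..
  have eR: "qsym q (tmult f g) w = sum TR (Pow {..<N})" unfolding L1 TR_def N_def ..
  have disj': "set_mset (mset lg) \<inter> set_mset (mset lf) = {}" "set_mset (mset lf) \<inter> set_mset (mset lg) = {}"
    using disj by auto
  have KLL: "P = YP \<and> (\<forall>i<N. w ! i \<in> set lf \<union> set lg)" if "P \<in> Pow {..<N}" "TL P \<noteq> 0" for P
  proof -
    have nz: "qsym q g (sub w P) \<noteq> 0" "qsym q f (sub w ({..<length w} - P)) \<noteq> 0" using that(2) unfolding TL_def N_def by auto
    have PN: "P \<subseteq> {..<length w}" using that(1) unfolding N_def by auto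
    show ?thesis using KL[OF PN G F disj'(1) nz] unfolding YP_def N_def by auto
  qed
  have KLR: "P = XP \<and> (\<forall>i<N. w ! i \<in> set lf \<union> set lg)" if "P \<in> Pow {..<N}" "TR P \<noteq> 0" for P
  proof -
    have nz: "qsym q f (sub w P) \<noteq> 0" "qsym q g (sub w ({..<length w} - P)) \<noteq> 0" using that(2) unfolding TR_def N_def by auto
    have PN: "P \<subseteq> {..<length w}" using that(1) unfolding N_def by auto
    show ?thesis using KL[OF PN F G disj'(2) nz] unfolding XP_def N_def by auto
  qed
  show ?thesis
  proof (cases "\<forall>i<N. w ! i \<in> set lf \<union> set lg")
    case False
    have "sum TL (Pow {..<N}) = 0" using KLL False by (intro sum.neutral) blast
    moreover have "sum TR (Pow {..<N}) = 0" using KLR False by (intro sum.neutral) blast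
    ultimately show ?thesis using eL eR by simp
  next
    case True
    have XYc: "{..<N} - YP = XP" "{..<N} - XP = YP" using True disj unfolding XP_def YP_def by auto
    have XPs: "XP \<in> Pow {..<N}" "YP \<in> Pow {..<N}" unfolding XP_def YP_def by auto
    have L: "sum TL (Pow {..<N}) = TL YP" using KLL XPs by (intro sum_single) auto
    have R: "sum TR (Pow {..<N}) = TR XP" using KLR XPs by (intro sum_single) auto
    have fin: "finite XP" "finite YP" unfolding XP_def YP_def by auto
    show ?thesis
    proof (cases "qsym q g (sub w YP) = 0 \<or> qsym q f (sub w XP) = 0")
      case True
      then show ?thesis using eL eR L R XYc unfolding TL_def TR_def by auto
    next
      case False
      then have m: "mset (sub w YP) = mset lg" "mset (sub w XP) = mset lf"
        using qsym_supp[OF G] qsym_supp[OF F] by auto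
      have "chi q lg lf = chi q (sub w YP) (sub w XP)" using chi_mset m by metis
      also have "\<dots> = (\<Prod>i\<in>YP. \<Prod>j\<in>XP. q (w ! i) (w ! j))" by (rule chi_sub[OF fin(2) fin(1)])
      finally have chi: "chi q lg lf = (\<Prod>i\<in>YP. \<Prod>j\<in>XP. q (w ! i) (w ! j))" .
      have cr: "cross q w YP = chi q lg lf * cross q w XP"
        unfolding chi
      proof (rule crossid)
        show "XP \<inter> YP = {}" using disj unfolding XP_def YP_def by auto
        show "XP \<union> YP = {..<length w}" using True unfolding XP_def YP_def N_def by auto
        fix i j assume "i \<in> YP" "j \<in> XP"
        then show "q (w ! i) (w ! j) * q (w ! j) (w ! i) = 1" using sy unfolding XP_def YP_def by (auto simp: mult.commute)
      qed
      show ?thesis using eL eR L R XYc cr unfolding TL_def TR_def by (simp add: mult_ac)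
    qed
  qed
qed


lemma beval_Br_qsym:
  "qsym q (beval q (Br s t)) x = qsym q (tmult (beval q t) (beval q s)) x
     - chi q (letters t) (letters s) * qsym q (tmult (beval q s) (beval q t)) x"
  by (simp only: beval.simps qsym_diff qsym_scal)

lemma mixed_zero:
  assumes disjAB: "A \<inter> B = {}" and sy: "\<forall>i\<in>A. \<forall>j\<in>B. q i j * q j i = 1"
  shows "set (letters t) \<subseteq> A \<union> B \<Longrightarrow> set (letters t) \<inter> A \<noteq> {} \<Longrightarrow> set (letters t) \<inter> B \<noteq> {}
    \<Longrightarrow> qsym q (beval q t) = (\<lambda>_. 0)"
proof (induction t)
  case (Letter i) then show ?case using disjAB by auto
next
  case (Br s t)
  have sub: "set (letters s) \<subseteq> A \<union> B" "set (letters t) \<subseteq> A \<union> B" using Br.prems(1) by auto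
  show ?case
  proof (cases "set (letters s) \<inter> A \<noteq> {} \<and> set (letters s) \<inter> B \<noteq> {}")
    case True
    then have z: "qsym q (beval q s) = (\<lambda>_. 0)" using Br.IH(1) sub by blast
    show ?thesis
    proof
      fix x show "qsym q (beval q (Br s t)) x = 0"
        unfolding beval_Br_qsym by (simp add: ideal_l[OF z] ideal_r[OF z])
    qed
  next
    case sF: False
    show ?thesis
    proof (cases "set (letters t) \<inter> A \<noteq> {} \<and> set (letters t) \<inter> B \<noteq> {}")
      case True
      then have z: "qsym q (beval q t) = (\<lambda>_. 0)" using Br.IH(2) sub by blast
      show ?thesis
      proof
        fix x show "qsym q (beval q (Br s t)) x = 0"
          unfolding beval_Br_qsym by (simp add: ideal_l[OF z] ideal_r[OF z])
      qed
    next
      case tF: False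
      have ns: "set (letters s) \<noteq> {}" "set (letters t) \<noteq> {}" using letters_ne by auto
      have sAB: "set (letters s) \<subseteq> A \<or> set (letters s) \<subseteq> B" using sF sub(1) by blast
      have tAB: "set (letters t) \<subseteq> A \<or> set (letters t) \<subseteq> B" using tF sub(2) by blast
      have cases: "(set (letters s) \<subseteq> A \<and> set (letters t) \<subseteq> B) \<or> (set (letters s) \<subseteq> B \<and> set (letters t) \<subseteq> A)"
        using sAB tAB Br.prems(2,3) disjAB by auto
      have dj: "set (letters s) \<inter> set (letters t) = {}" using cases disjAB ns by blast
      have sy': "\<forall>x\<in>set (letters s). \<forall>y\<in>set (letters t). q x y * q y x = 1"
      proof (intro ballI)
        fix x y assume xy: "x \<in> set (letters s)" "y \<in> set (letters t)"
        from cases show "q x y * q y x = 1"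
        proof
          assume "set (letters s) \<subseteq> A \<and> set (letters t) \<subseteq> B"
          then show ?thesis using sy xy by blast
        next
          assume "set (letters s) \<subseteq> B \<and> set (letters t) \<subseteq> A"
          then have "q y x * q x y = 1" using sy xy by blast
          then show ?thesis by (simp add: mult.commute)
        qed
      qed
      show ?thesis
      proof
        fix x
        have "qsym q (tmult (beval q t) (beval q s)) x = chi q (letters t) (letters s) * qsym q (tmult (beval q s) (beval q t)) x"
          by (rule CL[OF beval_supp beval_supp dj sy'])
        then show "qsym q (beval q (Br s t)) x = 0" unfolding beval_Br_qsym by simp
      qed
    qed
  qed
qed

lemma mono_supp: "mono u x \<noteq> 0 \<Longrightarrow> mset x = mset u"
  unfolding mono_def by (simp split: if_splits)

lemma sub_prefix: "sub (a @ b) {..<length a} = a"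
proof -
  have "sl {..<length a} = [0..<length a]" unfolding sl_def by (simp add: lessThan_atLeast0)
  then show ?thesis unfolding sub_def by (auto intro: nth_equalityI simp: nth_append)
qed

lemma sub_suffix: "sub (a @ b) ({..<length (a @ b)} - {..<length a}) = b"
proof -
  have "{..<length (a @ b)} - {..<length a} = {length a..<length a + length b}" by auto
  then have "sl ({..<length (a @ b)} - {..<length a}) = [length a..<length a + length b]" unfolding sl_def by simp
  then show ?thesis unfolding sub_def by (auto intro: nth_equalityI simp: nth_append)
qed

lemma cross_prefix: "cross q (a @ b) {..<length a} = 1"
proof -
  have "crossset (length (a @ b)) {..<length a} = {}" unfolding crossset_def by auto
  then show ?thesis unfolding cross_def by simp
qed

theorem corollary5p2:
  fixes q :: "nat \<Rightarrow> nat \<Rightarrow> 'a::field_char_0" and n :: nat and u v :: "nat list"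
  assumes "alg_closed_field TYPE('a)"
    and "\<forall>i<n. \<forall>j<n. q i j \<noteq> 0"
    and "u \<noteq> []" and "v \<noteq> []"
    and "set u \<subseteq> {..<n}" and "set v \<subseteq> {..<n}"
    and "set u \<inter> set v = {}"
    and "\<forall>i\<in>set u. \<forall>j\<in>set v. q i j * q j i = 1"
  shows "((\<not> nichols_zero q (mono u) \<and> \<not> nichols_zero q (mono v))
            \<longleftrightarrow> \<not> nichols_zero q (mono (u @ v)))
       \<and> (\<not> nichols_zero q (mono (u @ v)) \<longleftrightarrow> \<not> in_LV n q (mono (u @ v)))"
proof -
  note une = assms(3) and vne = assms(4) and disj = assms(7) and sy = assms(8)
  have muv: "(mono (u @ v) :: 'a tensor) = tmult (mono u) (mono v)" by (rule mono_app)
  have P1: "(\<not> nichols_zero q (mono u) \<and> \<not> nichols_zero q (mono v)) \<longleftrightarrow> \<not> nichols_zero q (mono (u @ v))"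
  proof
    assume "\<not> nichols_zero q (mono u) \<and> \<not> nichols_zero q (mono v)"
    then obtain a b where a: "qsym q (mono u) a \<noteq> 0" and b: "qsym q (mono v) b \<noteq> 0"
      unfolding nichols_zero_def by (meson ext)
    have ma: "mset a = mset u" by (rule qsym_supp[OF mono_supp a])
    have mb: "mset b = mset v" by (rule qsym_supp[OF mono_supp b])
    have sa: "set a = set u" "set b = set v" using ma mb by (metis set_mset_mset)+
    define w where "w = a @ b"
    define T where "T = (\<lambda>P. cross q w P * qsym q (mono u) (sub w P) * qsym q (mono v) (sub w ({..<length w} - P)))"
    have "qsym q (mono (u @ v)) w = sum T (Pow {..<length w})" unfolding muv L1 T_def ..
    also have "\<dots> = T {..<length a}"
    proof (rule sum_single)
      show "{..<length a} \<in> Pow {..<length w}" unfolding w_def by auto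
    next
      fix P assume P: "P \<in> Pow {..<length w}" "P \<noteq> {..<length a}"
      show "T P = 0"
      proof (rule ccontr)
        assume "T P \<noteq> 0"
        then have nz: "qsym q (mono u) (sub w P) \<noteq> 0" "qsym q (mono v) (sub w ({..<length w} - P)) \<noteq> 0"
          unfolding T_def by auto
        have dj: "set_mset (mset u) \<inter> set_mset (mset v) = {}" using disj by simp
        have "P = {i. i < length w \<and> w ! i \<in> set_mset (mset u)}"
          using KL(1)[OF _ mono_supp mono_supp dj nz] P(1) by auto
        also have "\<dots> = {..<length a}"
        proof (rule set_eqI, rule iffI)
          fix i assume "i \<in> {i. i < length w \<and> w ! i \<in> set_mset (mset u)}"
          then have i: "i < length w" "w ! i \<in> set u" by auto
          show "i \<in> {..<length a}"
          proof (rule ccontr)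
            assume "i \<notin> {..<length a}"
            then have "w ! i = b ! (i - length a)" "i - length a < length b" using i unfolding w_def by (auto simp: nth_append)
            then have "w ! i \<in> set v" using sa by (metis nth_mem)
            then show False using i disj by auto
          qed
        next
          fix i assume "i \<in> {..<length a}"
          then have "w ! i = a ! i" "i < length a" unfolding w_def by (auto simp: nth_append)
          then have "w ! i \<in> set u" using sa by (metis nth_mem)
          then show "i \<in> {i. i < length w \<and> w ! i \<in> set_mset (mset u)}" using \<open>i < length a\<close> unfolding w_def by auto
        qed
        finally show False using P(2) by simp
      qed
    qed simp
    also have "\<dots> = qsym q (mono u) a * qsym q (mono v) b"
      unfolding T_def w_def cross_prefix sub_prefix sub_suffix by simp
    finally have "qsym q (mono (u @ v)) w \<noteq> 0" using a b by simp
    then show "\<not> nichols_zero q (mono (u @ v))" unfolding nichols_zero_def by metis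
  next
    assume h: "\<not> nichols_zero q (mono (u @ v))"
    show "\<not> nichols_zero q (mono u) \<and> \<not> nichols_zero q (mono v)"
    proof (intro conjI notI)
      assume "nichols_zero q (mono u)"
      then have "qsym q (mono (u @ v)) = (\<lambda>_. 0)" unfolding muv nichols_zero_def by (rule ideal_l)
      then show False using h unfolding nichols_zero_def by simp
    next
      assume "nichols_zero q (mono v)"
      then have "qsym q (mono (u @ v)) = (\<lambda>_. 0)" unfolding muv nichols_zero_def by (rule ideal_r)
      then show False using h unfolding nichols_zero_def by simp
    qed
  qed
  have claimB: "qsym q (beval q t) x = 0" if mx: "mset x = mset (u @ v)" for t x
  proof (rule ccontr)
    assume nz: "qsym q (beval q t) x \<noteq> 0"
    have "mset x = mset (letters t)" by (rule qsym_supp[OF beval_supp nz])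
    then have st: "set (letters t) = set u \<union> set v" using mx by (metis set_mset_mset set_append)
    have "qsym q (beval q t) = (\<lambda>_. 0)"
      by (rule mixed_zero[OF disj sy]) (use st une vne in auto)
    then show False using nz by simp
  qed
  have P2: "\<not> nichols_zero q (mono (u @ v)) \<longleftrightarrow> \<not> in_LV n q (mono (u @ v))"
  proof
    assume h: "\<not> nichols_zero q (mono (u @ v))"
    show "\<not> in_LV n q (mono (u @ v))"
    proof
      assume "in_LV n q (mono (u @ v))"
      then obtain ts cs where z: "nichols_zero q (\<lambda>w. mono (u @ v) w - (\<Sum>k<length ts. cs ! k * beval q (ts ! k) w))"
        unfolding in_LV_def by blast
      have "qsym q (mono (u @ v)) x = 0" for x
      proof (cases "mset x = mset (u @ v)")
        case True
        have "0 = qsym q (\<lambda>w. mono (u @ v) w - (\<Sum>k<length ts. cs ! k * beval q (ts ! k) w)) x"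
          using z unfolding nichols_zero_def by metis
        also have "\<dots> = qsym q (mono (u @ v)) x - (\<Sum>k<length ts. cs ! k * qsym q (beval q (ts ! k)) x)"
          by (simp only: qsym_diff qsym_sum)
        also have "(\<Sum>k<length ts. cs ! k * qsym q (beval q (ts ! k)) x) = 0"
          using claimB[OF True] by simp
        finally show ?thesis by simp
      next
        case False
        then show ?thesis using qsym_supp[OF mono_supp] by metis
      qed
      then show False using h unfolding nichols_zero_def by auto
    qed
  next
    assume h: "\<not> in_LV n q (mono (u @ v))"
    show "\<not> nichols_zero q (mono (u @ v))"
    proof
      assume z: "nichols_zero q (mono (u @ v))"
      have "in_LV n q (mono (u @ v))" unfolding in_LV_def
        by (rule exI[of _ "[]"], rule exI[of _ "[]"]) (simp add: z)
      then show False using h by simp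
    qed
  qed
  show ?thesis using P1 P2 by blast
qed


end
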